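(* Consider the curved-exam game described in the context. Fix a student $i$, an effort $x_i\in[0,1)$ and an increment $\Delta x_i>0$ with $x_i+\Delta x_i<1$. Then the extended-real-valued function $$x_{-i}\longmapsto \log U_i(x_i+\Delta x_i,x_{-i})-\log U_i(x_i,x_{-i})\qquad(\log 0:=-\infty)$$ is non-decreasing in each opponent effort $x_j$, $j\neq i$, on $[0,1]^{n-1}$.
   Context: The curved-exam game $\Gamma_n$: fix an integer $n\ge 2$ (number of students), ability parameters $\alpha_1,\dots,\alpha_n\in(0,1)$ and a target mean $m\in(0,1)$. Each student $i\in\{1,\dots,n\}$ chooses an effort $x_i\in[0,1]$; write $x=(x_1,\dots,x_n)$, $x_{-i}=(x_j)_{j\neq i}$, $\bar x=\frac1n\sum_{j=1}^n x_j$ and $\bar x_{-i}=\frac1{n-1}\sum_{j\neq i}x_j$. Student $i$'s curved grade is $G_i(x)=x_i+\max(m-\bar x,0)=\max\!\big(m+\tfrac{n-1}{n}(x_i-\bar x_{-i}),\,x_i\big)$ (never truncated at $1$), his leisure is $1-x_i$, and his payoff is $U_i(x)=G_i(x)^{\alpha_i}(1-x_i)^{1-\alpha_i}$. *)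

theory Defs
  imports "HOL-Analysis.Analysis" "HOL-Library.Extended_Real"
begin

text \<open>Effort profiles are functions nat => real; students are indexed by 1..n.\<close>

definition mean_effort :: "nat \<Rightarrow> (nat \<Rightarrow> real) \<Rightarrow> real" where
  "mean_effort n x = (\<Sum>j\<in>{1..n}. x j) / real n"

text \<open>Curved grade G_i(x) = x_i + max(m - mean x, 0) (never truncated at 1).\<close>
definition grade :: "nat \<Rightarrow> real \<Rightarrow> (nat \<Rightarrow> real) \<Rightarrow> nat \<Rightarrow> real" where
  "grade n m x i = x i + max (m - mean_effort n x) 0"

definition payoff :: "nat \<Rightarrow> (nat \<Rightarrow> real) \<Rightarrow> real \<Rightarrow> (nat \<Rightarrow> real) \<Rightarrow> nat \<Rightarrow> real" where
  "payoff n alpha m x i = grade n m x i powr alpha i * (1 - x i) powr (1 - alpha i)"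

definition elog :: "real \<Rightarrow> ereal" where
  "elog u = (if u > 0 then ereal (ln u) else -\<infinity>)"

definition log_gain :: "nat \<Rightarrow> (nat \<Rightarrow> real) \<Rightarrow> real \<Rightarrow> nat \<Rightarrow> real \<Rightarrow> real \<Rightarrow> (nat \<Rightarrow> real) \<Rightarrow> ereal" where
  "log_gain n alpha m i xi dx x =
     elog (payoff n alpha m (x(i := xi + dx)) i) - elog (payoff n alpha m (x(i := xi)) i)"

end

theory Submission
  imports Defs
begin

lemma key_ineq:
  fixes N s1 s2 c c' :: real
  assumes "N \<ge> 1" "0 \<le> s1" "s1 < s2" "c' \<le> c"
  shows "(s2 + max (c - s2/N) 0) * (s1 + max (c' - s1/N) 0)
       \<le> (s2 + max (c' - s2/N) 0) * (s1 + max (c - s1/N) 0)"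
proof -
  define k where "k = 1 - 1/N"
  have k0: "0 \<le> k" using assms(1) by (simp add: k_def)
  have e: "\<And>u v. u + max (v - u/N) 0 = max (k * u + v) u"
    by (auto simp: k_def max_def algebra_simps)
  have A: "(k * s2 + c) * (k * s1 + c') \<le> (k * s2 + c') * (k * s1 + c)"
  proof -
    have "0 \<le> k*(s2-s1)*(c-c')" using k0 assms by simp
    thus ?thesis by (simp add: algebra_simps)
  qed
  define X where "X = k * s2 + c"
  define Y where "Y = k * s1 + c'"
  define X' where "X' = k * s2 + c'"
  define Y' where "Y' = k * s1 + c"
  have YY: "Y \<le> Y'" "X' \<le> X" using assms by (auto simp: X_def Y_def X'_def Y'_def)
  have A': "X * Y \<le> X' * Y'" using A by (simp add: X_def Y_def X'_def Y'_def)
  have R1: "s2 * s1 \<le> max X' s2 * max Y' s1"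
    using assms by (intro mult_mono) auto
  have R2: "s2 * Y' \<le> max X' s2 * max Y' s1" if "Y' \<ge> 0"
    using assms that by (intro mult_mono) auto
  have R3: "X' * Y' \<le> max X' s2 * max Y' s1" if "Y' \<ge> 0" "X' \<ge> 0"
    using assms that by (intro mult_mono) auto
  have "max X s2 * max Y s1 \<le> max X' s2 * max Y' s1"
  proof (cases "X \<le> s2")
    case True
    hence L: "max X s2 = s2" by simp
    show ?thesis
    proof (cases "Y \<le> s1")
      case True thus ?thesis using L R1 by simp
    next
      case False
      hence "max Y s1 = Y" "Y' \<ge> 0" using YY assms by auto
      moreover have "s2 * Y \<le> s2 * Y'" using YY assms by (intro mult_left_mono) auto
      ultimately show ?thesis using L R2 by simp
    qed
  next
    case False
    hence L: "max X s2 = X" by simp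
    show ?thesis
    proof (cases "Y \<le> s1")
      case True
      hence M: "max Y s1 = s1" by simp
      show ?thesis
      proof (cases "c \<ge> 0")
        case True
        have "X * s1 \<le> s2 * Y'" using True k0 assms
          by (simp add: X_def Y'_def algebra_simps mult_right_mono mult_left_mono)
        moreover have "Y' \<ge> 0" using True k0 assms by (simp add: Y'_def)
        ultimately show ?thesis using L M R2 by simp
      next
        case False
        have "k \<le> 1" using assms(1) by (simp add: k_def)
        hence "k * s2 \<le> 1 * s2" using assms by (intro mult_right_mono) auto
        hence "X < s2" using False unfolding X_def by simp
        thus ?thesis using \<open>\<not> X \<le> s2\<close> by simp
      qed
    next
      case False
      hence M: "max Y s1 = Y" by simp
      have Y'0: "Y' \<ge> 0" using False YY assms by auto
      show ?thesis
      proof (cases "X' \<ge> 0")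
        case True thus ?thesis using L M A' R3 Y'0 by simp
      next
        case False
        have "X' * Y' \<le> 0" using False Y'0 by (intro mult_nonpos_nonneg) auto
        hence "X * Y \<le> 0" using A' by linarith
        moreover have "0 \<le> max X' s2 * max Y' s1" using assms by simp
        ultimately show ?thesis using L M by simp
      qed
    qed
  qed
  thus ?thesis unfolding e X_def Y_def X'_def Y'_def .
qed

lemma payoff_eq:
  fixes y :: "nat \<Rightarrow> real"
  assumes "i \<in> {1..n}"
  shows "payoff n alpha m (y(i := s)) i =
     (s + max ((m - (\<Sum>k\<in>{1..n}-{i}. y k)/real n) - s/real n) 0) powr alpha i * (1 - s) powr (1 - alpha i)"
proof -
  have "(\<Sum>k\<in>{1..n}. (y(i:=s)) k) = s + (\<Sum>k\<in>{1..n}-{i}. (y(i:=s)) k)"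
    using assms by (simp add: sum.remove)
  also have "(\<Sum>k\<in>{1..n}-{i}. (y(i:=s)) k) = (\<Sum>k\<in>{1..n}-{i}. y k)"
    by (rule sum.cong) auto
  finally have "mean_effort n (y(i:=s)) = (s + (\<Sum>k\<in>{1..n}-{i}. y k)) / real n"
    by (simp add: mean_effort_def)
  thus ?thesis unfolding payoff_def grade_def by (simp add: diff_divide_distrib add_divide_distrib algebra_simps)
qed


lemma elog_pos:
  assumes "G > 0" "u > 0"
  shows "elog (G powr a * u powr b) = ereal (a * ln G + b * ln u)"
  using assms by (simp add: elog_def ln_mult ln_powr)

theorem mainTheorem1:
  fixes n :: nat and alpha :: "nat \<Rightarrow> real" and m :: real
    and i :: nat and xi dx :: real and x :: "nat \<Rightarrow> real" and j :: nat and t t' :: real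
  assumes "n \<ge> 2"
    and "\<forall>k\<in>{1..n}. 0 < alpha k \<and> alpha k < 1"
    and "0 < m" "m < 1"
    and "i \<in> {1..n}"
    and "0 \<le> xi" "xi < 1" "0 < dx" "xi + dx < 1"
    and "\<forall>k\<in>{1..n} - {i}. 0 \<le> x k \<and> x k \<le> 1"
    and "j \<in> {1..n}" "j \<noteq> i"
    and "0 \<le> t" "t \<le> t'" "t' \<le> 1"
  shows "log_gain n alpha m i xi dx (x(j := t)) \<le> log_gain n alpha m i xi dx (x(j := t'))"
proof -
  define N where "N = real n"
  have N1: "N \<ge> 1" using assms(1) by (simp add: N_def)
  define a where "a = alpha i"
  have a: "0 < a" "a < 1" using assms(2,5) by (auto simp: a_def)
  define S0 where "S0 = (\<Sum>k\<in>{1..n}-{i}-{j}. x k)"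
  have Ssplit: "(\<Sum>k\<in>{1..n}-{i}. (x(j:=u)) k) = u + S0" for u
  proof -
    have "j \<in> {1..n}-{i}" using assms by auto
    hence "(\<Sum>k\<in>{1..n}-{i}. (x(j:=u)) k) = u + (\<Sum>k\<in>{1..n}-{i}-{j}. (x(j:=u)) k)"
      by (simp add: sum.remove)
    also have "(\<Sum>k\<in>{1..n}-{i}-{j}. (x(j:=u)) k) = S0"
      unfolding S0_def by (rule sum.cong) auto
    finally show ?thesis .
  qed
  define c where "c = m - (t + S0) / N"
  define c' where "c' = m - (t' + S0) / N"
  have cc: "c' \<le> c" using assms N1 unfolding c_def c'_def
    by (simp add: divide_right_mono)
  define G where "G = (\<lambda>s d. s + max (d - s/N) 0)"
  have P: "payoff n alpha m ((x(j:=t))(i := s)) i = G s c powr a * (1 - s) powr (1 - a)"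
    and P': "payoff n alpha m ((x(j:=t'))(i := s)) i = G s c' powr a * (1 - s) powr (1 - a)" for s
    using payoff_eq[OF assms(5), where alpha=alpha and m=m and y="x(j:=t)" and s=s] payoff_eq[OF assms(5), where alpha=alpha and m=m and y="x(j:=t')" and s=s]
    by (simp_all only: Ssplit G_def c_def c'_def N_def a_def)
  define p where "p = xi"
  define q where "q = xi + dx"
  have pq: "0 \<le> p" "p < q" "q < 1" using assms by (auto simp: p_def q_def)
  have Gq: "G q c > 0" "G q c' > 0" using pq by (auto simp: G_def intro: add_pos_nonneg)
  have Gp: "G p c' \<le> G p c" "0 \<le> G p c'" using cc pq by (auto simp: G_def)
  have LG: "log_gain n alpha m i xi dx (x(j := u)) =
      elog (payoff n alpha m ((x(j:=u))(i := q)) i) - elog (payoff n alpha m ((x(j:=u))(i := p)) i)" for u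
    by (simp add: log_gain_def p_def q_def)
  have eq: "elog (payoff n alpha m ((x(j:=t))(i := q)) i) = ereal (a * ln (G q c) + (1 - a) * ln (1 - q))"
    "elog (payoff n alpha m ((x(j:=t'))(i := q)) i) = ereal (a * ln (G q c') + (1 - a) * ln (1 - q))"
    unfolding P P' using Gq pq by (simp_all only: elog_pos diff_gt_0_iff_gt)
  show ?thesis
  proof (cases "G p c' = 0")
    case True
    have "payoff n alpha m ((x(j:=t'))(i := p)) i = 0" unfolding P' True by (rule mult_eq_0_iff[THEN iffD2], rule disjI1, rule powr_0)
    hence E: "elog (payoff n alpha m ((x(j:=t'))(i := p)) i) = -\<infinity>" unfolding elog_def by (rule if_not_P[OF less_irrefl[of 0, unfolded]] | simp)
    hence "log_gain n alpha m i xi dx (x(j := t')) = \<infinity>"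
      unfolding LG eq E by simp
    thus ?thesis by simp
  next
    case False
    hence Gp0: "G p c' > 0" "G p c > 0" using Gp by auto
    have eq2: "elog (payoff n alpha m ((x(j:=t))(i := p)) i) = ereal (a * ln (G p c) + (1 - a) * ln (1 - p))"
      "elog (payoff n alpha m ((x(j:=t'))(i := p)) i) = ereal (a * ln (G p c') + (1 - a) * ln (1 - p))"
      unfolding P P' using Gp0 pq by (simp_all only: elog_pos diff_gt_0_iff_gt)
    have K: "G q c * G p c' \<le> G q c' * G p c"
      unfolding G_def using key_ineq[OF N1 pq(1) pq(2) cc] by simp
    have "ln (G q c * G p c') \<le> ln (G q c' * G p c)"
      using K Gq Gp0 by simp
    hence "ln (G q c) + ln (G p c') \<le> ln (G q c') + ln (G p c)"
      using Gq Gp0 by (simp add: ln_mult)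
    hence "a * (ln (G q c) + ln (G p c')) \<le> a * (ln (G q c') + ln (G p c))"
      using a by (intro mult_left_mono) auto
    hence H: "a * ln (G q c) + a * ln (G p c') \<le> a * ln (G q c') + a * ln (G p c)"
      by (simp add: distrib_left)
    have "ereal (a * ln (G q c) + (1 - a) * ln (1 - q)) - ereal (a * ln (G p c) + (1 - a) * ln (1 - p))
       \<le> ereal (a * ln (G q c') + (1 - a) * ln (1 - q)) - ereal (a * ln (G p c') + (1 - a) * ln (1 - p))"
      using H by simp
    thus ?thesis unfolding LG eq eq2 .
  qed
qed

end
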